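(* Let $X\in\mathrm{St}(n,k)$ be fixed, $\widehat\beta\colon I\to\mathrm{St}(n,k)$ a curve and $\widehat Z$ a normal vector field along $\widehat\beta$ (i.e. $\widehat Z(t)\in N_{\widehat\beta(t)}\mathrm{St}(n,k)$). Let $q=(R,\theta)\colon I\to O(n)\times O(k)$ be a horizontal lift of $\widehat\beta$. Then $\widehat Z$ is normal parallel along $\widehat\beta$ if and only if $z^\perp(t)=R(t)^\top\widehat Z(t)\theta(t)\in N_X\mathrm{St}(n,k)$ satisfies $$\dot z^\perp(t)=-\big(P_X^\perp\circ f_{(\xi_1(t),\xi_2(t))}\big)(z^\perp(t)),\quad t\in I,$$ where $(\xi_1(t),\xi_2(t))=(R(t)^\top\dot R(t),\theta(t)^\top\dot\theta(t))$.
   Context: $\mathrm{St}(n,k)=\{Y\in\mathbb{R}^{n\times k}:Y^\top Y=I_k\}$ with metric $2\operatorname{tr}(V^\top W)$; $T_Y\mathrm{St}(n,k)=\{V:Y^\top V+V^\top Y=0\}$, $N_Y\mathrm{St}(n,k)$ its Frobenius-orthogonal complement, $P_Y^\perp(V)=\tfrac12Y(Y^\top V+V^\top Y)$ the orthogonal projection onto $N_Y\mathrm{St}(n,k)$. A normal field $\widehat Z$ along $\widehat\beta$ is normal parallel if $P^\perp_{\widehat\beta(t)}\big(\tfrac{d}{dt}\widehat Z(t)\big)=0$ for all $t$. $f_{(\xi_1,\xi_2)}(V)=\xi_1V-V\xi_2$. Horizontal lift: $R(t)X\theta(t)^\top=\widehat\beta(t)$ and $(R^\top\dot R,\theta^\top\dot\theta)\in\mathfrak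 p$, where $\mathfrak p$ is the orthogonal complement in $\mathfrak{so}(n)\times\mathfrak{so}(k)$ of $\mathfrak h=\{(\Omega,\eta):\Omega X=X\eta\}$ with respect to $\langle(\Omega_1,\Psi_1),(\Omega_2,\Psi_2)\rangle=-\operatorname{tr}(\Omega_1\Omega_2)+2\operatorname{tr}(\Psi_1\Psi_2)$. *)

theory Defs
  imports "HOL-Analysis.Analysis"
begin

text \<open>Matrices are type-indexed: an n x k real matrix is real^'k^'n.\<close>

definition stiefel :: "(real^'k^'n) set" where
  "stiefel = {Y. transpose Y ** Y = mat 1}"

definition frob_inner :: "real^'k^'n \<Rightarrow> real^'k^'n \<Rightarrow> real" where
  "frob_inner V W = trace (transpose V ** W)"

definition tangent_space :: "real^'k^'n \<Rightarrow> (real^'k^'n) set" where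
  "tangent_space Y = {V. transpose Y ** V + transpose V ** Y = 0}"

definition normal_space :: "real^'k^'n \<Rightarrow> (real^'k^'n) set" where
  "normal_space Y = {V. \<forall>W \<in> tangent_space Y. frob_inner W V = 0}"

definition P_perp :: "real^'k^'n \<Rightarrow> real^'k^'n \<Rightarrow> real^'k^'n" where
  "P_perp Y V = (1/2) *\<^sub>R (Y ** (transpose Y ** V + transpose V ** Y))"

definition normal_field :: "real set \<Rightarrow> (real \<Rightarrow> real^'k^'n) \<Rightarrow> (real \<Rightarrow> real^'k^'n) \<Rightarrow> bool" where
  "normal_field I \<beta> Z \<longleftrightarrow> (\<forall>t\<in>I. Z t \<in> normal_space (\<beta> t))"

definition normal_parallel :: "real set \<Rightarrow> (real \<Rightarrow> real^'k^'n) \<Rightarrow> (real \<Rightarrow> real^'k^'n) \<Rightarrow> bool" where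
  "normal_parallel I \<beta> Z \<longleftrightarrow> (\<forall>t\<in>I. P_perp (\<beta> t) (vector_derivative Z (at t)) = 0)"

definition f_xi :: "real^'n^'n \<Rightarrow> real^'k^'k \<Rightarrow> real^'k^'n \<Rightarrow> real^'k^'n" where
  "f_xi \<xi>1 \<xi>2 V = \<xi>1 ** V - V ** \<xi>2"

definition skew :: "(real^'m^'m) set" where
  "skew = {A. transpose A = - A}"

definition h_alg :: "real^'k^'n \<Rightarrow> ((real^'n^'n) \<times> (real^'k^'k)) set" where
  "h_alg X = {(\<Omega>, \<eta>). \<Omega> \<in> skew \<and> \<eta> \<in> skew \<and> \<Omega> ** X = X ** \<eta>}"

definition pair_inner :: "(real^'n^'n) \<times> (real^'k^'k) \<Rightarrow> (real^'n^'n) \<times> (real^'k^'k) \<Rightarrow> real" where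
  "pair_inner a b = - trace (fst a ** fst b) + 2 * trace (snd a ** snd b)"

definition p_alg :: "real^'k^'n \<Rightarrow> ((real^'n^'n) \<times> (real^'k^'k)) set" where
  "p_alg X = {a. fst a \<in> skew \<and> snd a \<in> skew \<and> (\<forall>b \<in> h_alg X. pair_inner a b = 0)}"

definition horizontal_lift ::
  "real set \<Rightarrow> real^'k^'n \<Rightarrow> (real \<Rightarrow> real^'k^'n) \<Rightarrow> (real \<Rightarrow> real^'n^'n) \<Rightarrow> (real \<Rightarrow> real^'k^'k) \<Rightarrow> bool" where
  "horizontal_lift I X \<beta> R \<theta> \<longleftrightarrow>
     (\<forall>t\<in>I. orthogonal_matrix (R t) \<and> orthogonal_matrix (\<theta> t)
        \<and> R t ** X ** transpose (\<theta> t) = \<beta> t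
        \<and> R differentiable (at t) \<and> \<theta> differentiable (at t)
        \<and> (transpose (R t) ** vector_derivative R (at t),
           transpose (\<theta> t) ** vector_derivative \<theta> (at t)) \<in> p_alg X)"

end

theory Submission imports Defs begin

lemma mm_rdistrib: "((A::real^'m^'n) + B) ** C = A ** C + B ** C"
  by (simp add: matrix_matrix_mult_def vec_eq_iff sum.distrib algebra_simps)
lemma mm_ldistrib: "(A::real^'m^'n) ** (B + C) = A ** B + A ** C"
  by (simp add: matrix_matrix_mult_def vec_eq_iff sum.distrib algebra_simps)
lemma mm_scaleR_left: "(c *\<^sub>R (A::real^'m^'n)) ** B = c *\<^sub>R (A ** B)"
  by (simp add: matrix_matrix_mult_def vec_eq_iff sum_distrib_left algebra_simps)
lemma mm_scaleR_right: "(A::real^'m^'n) ** (c *\<^sub>R B) = c *\<^sub>R (A ** B)"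
  by (simp add: matrix_matrix_mult_def vec_eq_iff sum_distrib_left algebra_simps)
lemma mm_uminus_left: "(- (A::real^'m^'n)) ** B = - (A ** B)"
  by (simp add: matrix_matrix_mult_def vec_eq_iff sum_negf)
lemma mm_uminus_right: "(A::real^'m^'n) ** (- B) = - (A ** B)"
  by (simp add: matrix_matrix_mult_def vec_eq_iff sum_negf)
lemma mm_diff_left: "((A::real^'m^'n) - B) ** C = A ** C - B ** C"
  by (simp add: matrix_matrix_mult_def vec_eq_iff sum_subtractf algebra_simps)
lemma mm_diff_right: "(A::real^'m^'n) ** (B - C) = A ** B - A ** C"
  by (simp add: matrix_matrix_mult_def vec_eq_iff sum_subtractf algebra_simps)
lemma tr_add: "transpose ((A::real^'m^'n) + B) = transpose A + transpose B"
  by (simp add: transpose_def vec_eq_iff)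
lemma tr_diff: "transpose ((A::real^'m^'n) - B) = transpose A - transpose B"
  by (simp add: transpose_def vec_eq_iff)
lemma tr_uminus: "transpose (- (A::real^'m^'n)) = - transpose A"
  by (simp add: transpose_def vec_eq_iff)

lemmas mm_simps = mm_rdistrib mm_ldistrib mm_scaleR_left mm_scaleR_right mm_uminus_left
  mm_uminus_right mm_diff_left mm_diff_right tr_add tr_diff tr_uminus transpose_scalar
  matrix_transpose_mul

lemma mm_bb: "bounded_bilinear ((**) :: real^'m^'n \<Rightarrow> real^'p^'m \<Rightarrow> real^'p^'n)"
proof -
  have "bilinear ((**) :: real^'m^'n \<Rightarrow> real^'p^'m \<Rightarrow> real^'p^'n)"
    unfolding bilinear_def by (auto intro!: linearI simp: mm_simps)
  then show ?thesis using bilinear_conv_bounded_bilinear by blast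
qed

lemma tr_bl: "bounded_linear (transpose :: real^'m^'n \<Rightarrow> real^'n^'m)"
  by (auto intro!: linearI simp: mm_simps linear_conv_bounded_linear[symmetric])

lemma P_bl: "bounded_linear (P_perp (X::real^'k^'n))"
  unfolding P_perp_def
  by (auto intro!: linearI simp: mm_simps linear_conv_bounded_linear[symmetric] algebra_simps)

lemma frob_inner_eq: "frob_inner V W = inner V W"
  unfolding frob_inner_def trace_def matrix_matrix_mult_def transpose_def inner_vec_def
  by (simp add: inner_real_def, subst sum.swap, simp add: mult.commute)

lemma trace_transpose: "trace (transpose (A::real^'n^'n)) = trace A"
  by (simp add: trace_def transpose_def)

lemma trace_skew_sym:
  assumes "transpose (A::real^'n^'n) = - A" "transpose S = S"
  shows "trace (A ** S) = 0"
proof -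
  have "trace (A ** S) = trace (transpose (A ** S))" by (simp add: trace_transpose)
  also have "\<dots> = trace (S ** (- A))" by (simp add: matrix_transpose_mul assms)
  also have "\<dots> = - trace (S ** A)" by (simp add: mm_simps trace_def sum_negf)
  also have "\<dots> = - trace (A ** S)" using trace_mul_sym[of S A] by simp
  finally show ?thesis by simp
qed

lemma normal_fix:
  assumes Y: "(Y::real^'k^'n) \<in> stiefel" and V: "V \<in> normal_space Y"
  shows "P_perp Y V = V"
proof -
  define S where "S = transpose Y ** V + transpose V ** Y"
  have YY: "transpose Y ** Y = mat 1" using Y by (simp add: stiefel_def)
  have St: "transpose S = S" by (simp add: S_def mm_simps)
  define W where "W = V - P_perp Y V"
  have P: "P_perp Y V = (1/2) *\<^sub>R (Y ** S)" by (simp add: P_perp_def S_def)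
  have YW: "transpose Y ** W = transpose Y ** V - (1/2) *\<^sub>R S"
    by (simp add: W_def P mm_simps matrix_mul_assoc YY)
  have WY: "transpose W ** Y = transpose V ** Y - (1/2) *\<^sub>R S"
    by (simp add: W_def P mm_simps St matrix_mul_assoc[symmetric] YY)
  have Wt: "W \<in> tangent_space Y"
  proof -
    have h: "(1/2) *\<^sub>R S + (1/2) *\<^sub>R S = S" by (simp add: scaleR_left_distrib[symmetric])
    have "transpose Y ** W + transpose W ** Y = (transpose Y ** V + transpose V ** Y) - ((1/2) *\<^sub>R S + (1/2) *\<^sub>R S)"
      unfolding YW WY by (simp add: algebra_simps)
    also have "\<dots> = 0" unfolding h by (simp add: S_def)
    finally show ?thesis unfolding tangent_space_def by simp
  qed
  have i1: "inner W V = 0" using V Wt by (simp add: normal_space_def frob_inner_eq)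
  have sk: "transpose (transpose W ** Y) = - (transpose W ** Y)"
    using Wt by (simp add: tangent_space_def matrix_transpose_mul eq_neg_iff_add_eq_0)
  have "inner W (P_perp Y V) = (1/2) * trace ((transpose W ** Y) ** S)"
    by (simp add: frob_inner_eq[symmetric] frob_inner_def P mm_simps matrix_mul_assoc
        trace_def scaleR_sum_right[symmetric] sum_distrib_left)
  also have "\<dots> = 0" using trace_skew_sym[OF sk St] by simp
  finally have i2: "inner W (P_perp Y V) = 0" .
  have "inner W W = 0" using i1 i2 by (simp add: W_def inner_diff_right)
  then show ?thesis by (simp add: W_def)
qed

lemma transfer:
  assumes R: "orthogonal_matrix (R::real^'n^'n)" and T: "orthogonal_matrix (T::real^'k^'k)"
    and B: "B = R ** X ** transpose T"
  shows "P_perp X (transpose R ** W ** T) = transpose R ** P_perp B W ** T"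
proof -
  have R1: "transpose R ** R = mat 1" and T1: "T ** transpose T = mat 1" "transpose T ** T = mat 1"
    using R T by (auto simp: orthogonal_matrix_def)
  have a: "transpose R ** B = X ** transpose T"
    by (simp add: B matrix_mul_assoc R1)
  have b: "B ** T = R ** X" by (simp add: B matrix_mul_assoc[symmetric] T1)
  have "transpose R ** P_perp B W ** T
      = (1/2) *\<^sub>R ((transpose R ** B) ** ((transpose B ** W) ** T + transpose W ** (B ** T)))"
    by (simp add: P_perp_def mm_simps matrix_mul_assoc)
  also have "\<dots> = (1/2) *\<^sub>R (X ** (transpose (B ** T) ** W ** T + transpose T ** transpose W ** (B ** T)))"
    by (simp add: a mm_simps matrix_mul_assoc)
  also have "\<dots> = P_perp X (transpose R ** W ** T)"
    by (simp add: b P_perp_def mm_simps matrix_mul_assoc)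
  finally show ?thesis by simp
qed

theorem lemma5p9:
  fixes X :: "real^'k^'n" and I :: "real set"
    and \<beta> Z :: "real \<Rightarrow> real^'k^'n"
    and R :: "real \<Rightarrow> real^'n^'n" and \<theta> :: "real \<Rightarrow> real^'k^'k"
  assumes "X \<in> stiefel"
    and "is_interval I" and "open I"
    and "\<forall>t\<in>I. \<beta> t \<in> stiefel"
    and "\<forall>t\<in>I. Z differentiable (at t)"
    and "normal_field I \<beta> Z"
    and "horizontal_lift I X \<beta> R \<theta>"
  shows "normal_parallel I \<beta> Z \<longleftrightarrow>
    (\<forall>t\<in>I. ((\<lambda>s. transpose (R s) ** Z s ** \<theta> s) has_vector_derivative
        - P_perp X (f_xi (transpose (R t) ** vector_derivative R (at t))
                         (transpose (\<theta> t) ** vector_derivative \<theta> (at t))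
                         (transpose (R t) ** Z t ** \<theta> t))) (at t))"
proof -
  define z where "z = (\<lambda>s. transpose (R s) ** Z s ** \<theta> s)"
  have zfix: "P_perp X (z s) = z s" if s: "s \<in> I" for s
  proof -
    have o: "orthogonal_matrix (R s)" "orthogonal_matrix (\<theta> s)" "R s ** X ** transpose (\<theta> s) = \<beta> s"
      using assms(7) s by (auto simp: horizontal_lift_def)
    have "P_perp X (z s) = transpose (R s) ** P_perp (\<beta> s) (Z s) ** \<theta> s"
      unfolding z_def by (rule transfer[OF o(1,2) o(3)[symmetric]])
    also have "P_perp (\<beta> s) (Z s) = Z s"
      using normal_fix assms(4,6) s by (auto simp: normal_field_def)
    finally show ?thesis by (simp add: z_def)
  qed
  have key: "P_perp (\<beta> t) (vector_derivative Z (at t)) = 0 \<longleftrightarrow>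
    (z has_vector_derivative
        - P_perp X (f_xi (transpose (R t) ** vector_derivative R (at t))
                         (transpose (\<theta> t) ** vector_derivative \<theta> (at t))
                         (z t))) (at t)" if t: "t \<in> I" for t
  proof -
    define Rd where "Rd = vector_derivative R (at t)"
    define Td where "Td = vector_derivative \<theta> (at t)"
    define Zd where "Zd = vector_derivative Z (at t)"
    define \<xi>1 where "\<xi>1 = transpose (R t) ** Rd"
    define \<xi>2 where "\<xi>2 = transpose (\<theta> t) ** Td"
    have o: "orthogonal_matrix (R t)" "orthogonal_matrix (\<theta> t)" "R t ** X ** transpose (\<theta> t) = \<beta> t"
      and dR: "R differentiable (at t)" and dT: "\<theta> differentiable (at t)"
      and p: "(\<xi>1, \<xi>2) \<in> p_alg X"
      using assms(7) t by (auto simp: horizontal_lift_def \<xi>1_def \<xi>2_def Rd_def Td_def)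
    have sk1: "transpose \<xi>1 = - \<xi>1" and sk2: "transpose \<xi>2 = - \<xi>2"
      using p by (auto simp: p_alg_def skew_def)
    have RR: "R t ** transpose (R t) = mat 1" "transpose (R t) ** R t = mat 1"
      and TT: "\<theta> t ** transpose (\<theta> t) = mat 1" "transpose (\<theta> t) ** \<theta> t = mat 1"
      using o by (auto simp: orthogonal_matrix_def)
    have Rd: "Rd = R t ** \<xi>1" by (simp add: \<xi>1_def matrix_mul_assoc RR)
    have Td: "Td = \<theta> t ** \<xi>2" by (simp add: \<xi>2_def matrix_mul_assoc TT)
    have RdT: "transpose Rd = - \<xi>1 ** transpose (R t)"
      by (simp add: Rd matrix_transpose_mul sk1)
    have hR: "(R has_vector_derivative Rd) (at t)" using dR vector_derivative_works Rd_def by blast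
    have hT: "(\<theta> has_vector_derivative Td) (at t)" using dT vector_derivative_works Td_def by blast
    have hZ: "(Z has_vector_derivative Zd) (at t)" using assms(5) t vector_derivative_works Zd_def by blast
    have d1: "((\<lambda>s. transpose (R s)) has_vector_derivative transpose Rd) (at t)"
      by (rule bounded_linear.has_vector_derivative[OF tr_bl hR])
    have d2: "((\<lambda>s. transpose (R s) ** Z s) has_vector_derivative
        (transpose (R t) ** Zd + transpose Rd ** Z t)) (at t)"
      by (rule bounded_bilinear.has_vector_derivative[OF mm_bb d1 hZ])
    have d3: "(z has_vector_derivative
        (transpose (R t) ** Z t ** Td + (transpose (R t) ** Zd + transpose Rd ** Z t) ** \<theta> t)) (at t)"
      unfolding z_def by (rule bounded_bilinear.has_vector_derivative[OF mm_bb d2 hT])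
    define w where "w = transpose (R t) ** Zd ** \<theta> t"
    have zd: "transpose (R t) ** Z t ** Td + (transpose (R t) ** Zd + transpose Rd ** Z t) ** \<theta> t
        = w - f_xi \<xi>1 \<xi>2 (z t)"
      by (simp add: w_def f_xi_def z_def Td RdT mm_simps matrix_mul_assoc)
    define zdot where "zdot = w - f_xi \<xi>1 \<xi>2 (z t)"
    have hz: "(z has_vector_derivative zdot) (at t)" using d3 zd zdot_def by simp
    have "((\<lambda>s. P_perp X (z s)) has_vector_derivative P_perp X zdot) (at t)"
      by (rule bounded_linear.has_vector_derivative[OF P_bl hz])
    then have "(z has_vector_derivative P_perp X zdot) (at t)"
      by (rule has_vector_derivative_transform_within_open[OF _ assms(3) t]) (simp add: zfix)
    then have Pz: "P_perp X zdot = zdot" using hz vector_derivative_unique_at by metis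
    have Pw: "P_perp X w = transpose (R t) ** P_perp (\<beta> t) Zd ** \<theta> t"
      unfolding w_def by (rule transfer[OF o(1,2) o(3)[symmetric]])
    have inv: "P_perp (\<beta> t) Zd = 0 \<longleftrightarrow> P_perp X w = 0"
    proof
      assume "P_perp (\<beta> t) Zd = 0" then show "P_perp X w = 0" by (simp add: Pw)
    next
      assume "P_perp X w = 0"
      then have "R t ** (transpose (R t) ** P_perp (\<beta> t) Zd ** \<theta> t) ** transpose (\<theta> t) = 0"
        by (simp add: Pw)
      then show "P_perp (\<beta> t) Zd = 0" by (simp add: matrix_mul_assoc RR) (simp add: matrix_mul_assoc[symmetric] TT)
    qed
    have lin: "P_perp X zdot = P_perp X w - P_perp X (f_xi \<xi>1 \<xi>2 (z t))"
      unfolding zdot_def by (rule linear_diff[OF bounded_linear.linear[OF P_bl]])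
    have "P_perp X w = 0 \<longleftrightarrow> zdot = - P_perp X (f_xi \<xi>1 \<xi>2 (z t))"
    proof -
      have e: "zdot = P_perp X w - P_perp X (f_xi \<xi>1 \<xi>2 (z t))" using lin Pz by simp
      show ?thesis unfolding e by (metis add_diff_cancel_right' diff_0 diff_add_cancel)
    qed
    also have "\<dots> \<longleftrightarrow> (z has_vector_derivative - P_perp X (f_xi \<xi>1 \<xi>2 (z t))) (at t)"
      using hz vector_derivative_unique_at by metis
    finally show ?thesis using inv by (simp add: Zd_def \<xi>1_def \<xi>2_def Rd_def Td_def)
  qed
  show ?thesis unfolding normal_parallel_def using key by (simp add: z_def)
qed

end
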